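(* Let $C\subset\mathbb{Z}_2^{l+r}$ be an even code (a subgroup with $|\alpha|\in2\mathbb{Z}$ for all $\alpha\in C$), and let $\varepsilon:C\times C\to\{\pm1\}$ be bimultiplicative with $\varepsilon(\alpha,\alpha)=(-1)^{|\alpha|/2}$ and $\varepsilon(\alpha,\beta)\varepsilon(\beta,\alpha)=(-1)^{|\alpha\beta|}$. Then the twisted group algebra $\mathbb{C}[\hat C]$ (basis $e_\alpha$, $e_\alpha e_\beta=\varepsilon(\alpha,\beta)e_{\alpha+\beta}$, $e_\alpha$ in degree $(0,\alpha)$, unit $e_0$) is a simple $(l,r)$-framed algebra whose structure codes are $D=\{0\}$ and $C$.
   Context: Let $\mathrm{IS}=\{0,\frac12,\frac1{16}\}$ with fusion rule $\star$ (values are subsets): $0\star h=h\star0=\{h\}$, $\frac12\star\frac12=\{0\}$, $\frac12\star\frac1{16}=\frac1{16}\star\frac12=\{\frac1{16}\}$, $\frac1{16}\star\frac1{16}=\{0,\frac12\}$; $A(h_0,h_1,h_2,h_3)=\{h: h\in h_2\star h_3,\ h_0\in h_1\star h\}$. For $h\in A(h_0,h_1,h_2,h_3)$, $h'\in A(h_0,h_2,h_1,h_3)$ define $B^{h,h'}_{h_0,h_1,h_2,h_3}$: $B_{*,0,*,*}=B_{*,*,0,*}=1$; $B_{*,\frac12,\frac12,*}=-1$; $B_{a,\frac12,\frac1{16},a'}=B_{a,\frac1{16},\frac12,a'}=i$ if $a$ or $a'$ is $\frac12$, else $-i$; $B^{b,b'}_{a,\frac1{16},\frac1{16},a'}=e^{-\pi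 i/8}\cdot\{1$ if $a,a'\ne\frac1{16},a=a'$; $i$ if $a,a'\neq\frac1{16},a\ne a'$; $\frac{1+i}2$ if $a=a'=\frac1{16},b=b'$; $\frac{1-i}2$ if $a=a'=\frac1{16},b\neq b'\}$. $\mathrm{IS}^{(l,r)}=\mathrm{IS}^l\times\mathrm{IS}^r$, $\lambda=(h_1,..,h_l,\bar h_1,..,\bar h_r)$, $s(\lambda)=\sum h_i-\sum\bar h_j$; $\star$, $A$ componentwise; $B^{\lambda,\lambda'}_{\lambda^0,\dots,\lambda^3}=\prod_{i\le l}B^{h_i,h'_i}_{h^0_i,\dots,h^3_i}\prod_{j\le r}\overline{B^{\bar h_j,\bar h'_j}_{\bar h^0_j,\dots,\bar h^3_j}}$. An $(l,r)$-framed algebra: finite-dimensional $\mathrm{IS}^{(l,r)}$-graded $S=\bigoplus S_\lambda$ over $\mathbb{C}$ with bilinear product, nonzero $1\in S_0$, $a\cdot_\lambda b$ the $S_\lambda$-component of $a\cdot b$, satisfying (FA1) $S_\lambda=0$ unless $s(\lambda)\in\mathbb{Z}$; (FA2) $S_0=\mathbb{C}1$, $1$ a two-sided unit; (FA3) $S_{\lambda^1}\cdot S_{\lambda^2}\subset\bigoplus_{\lambda\in\lambda^1\star\lambda^2}S_\lambda$; (FA4) $a_2\cdot_{\lambda^0}(a_1\cdot_{\lambda'}a_3)=\sum_{\lambda\in A(\lambda^0,\lambda^1,\lambda^2,\lambda^3)}B^{\lambda,\lambda'}_{\lambda^0,\lambda^1,\lambda^2,\lambda^3}a_1\cdot_{\lambda^0}(a_2\cdot_\lambda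 a_3)$ for $a_i\in S_{\lambda^i}$, $\lambda'\in A(\lambda^0,\lambda^2,\lambda^1,\lambda^3)$. Ideal: graded subspace $M$ with $S\cdot M\subset M$; simple: only ideals $0$ and $S$. Identify $\mathrm{IS}$ with $\{(d,c)\in\mathbb{Z}_2^2:dc=0\}$ via $0\leftrightarrow(0,0)$, $\frac12\leftrightarrow(0,1)$, $\frac1{16}\leftrightarrow(1,0)$, and componentwise $\mathrm{IS}^{(l,r)}$ with pairs $(d,c)\in(\mathbb{Z}_2^{l+r})^2$, $dc=0$. For $c\in\mathbb{Z}_2^{l+r}$, $|c|=|c|_l-|c|_r$ with $|c|_l,|c|_r$ the numbers of ones in the first $l$ and last $r$ coordinates; products of codewords are componentwise. Structure codes of $S$: $C_S=\{\alpha:S_{(0,\alpha)}\ne0\}$, $D_S=\{d:\bigoplus_cS_{(d,c)}\ne0\}$. *)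

theory Defs
  imports Complex_Main "HOL-Library.Function_Algebras"
begin

datatype IS = Z | H | S

fun hval :: "IS \<Rightarrow> real" where
  "hval Z = 0" | "hval H = 1/2" | "hval S = 1/16"

fun star1 :: "IS \<Rightarrow> IS \<Rightarrow> IS set" where
  "star1 Z h = {h}"
| "star1 h Z = {h}"
| "star1 H H = {Z}"
| "star1 H S = {S}"
| "star1 S H = {S}"
| "star1 S S = {Z, H}"

definition A1 :: "IS \<Rightarrow> IS \<Rightarrow> IS \<Rightarrow> IS \<Rightarrow> IS set" where
  "A1 h0 h1 h2 h3 = {h. h \<in> star1 h2 h3 \<and> h0 \<in> star1 h1 h}"

(* B^{h,h'}_{h0,h1,h2,h3}; value 0 on index combinations that never occur *)
fun B1 :: "IS \<Rightarrow> IS \<Rightarrow> IS \<Rightarrow> IS \<Rightarrow> IS \<Rightarrow> IS \<Rightarrow> complex" where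
  "B1 h h' a Z h2 a' = 1"
| "B1 h h' a h1 Z a' = 1"
| "B1 h h' a H H a' = -1"
| "B1 h h' a H S a' = (if a = H \<or> a' = H then \<i> else - \<i>)"
| "B1 h h' a S H a' = (if a = H \<or> a' = H then \<i> else - \<i>)"
| "B1 h h' a S S a' = exp (- pi * \<i> / 8) *
     (if a \<noteq> S \<and> a' \<noteq> S then (if a = a' then 1 else \<i>)
      else if a = S \<and> a' = S then (if h = h' then (1 + \<i>) / 2 else (1 - \<i>) / 2)
      else 0)"

section \<open>Grades: IS^(l,r), represented as nat \<Rightarrow> IS that are Z outside {..<l+r}\<close>

type_synonym grade = "nat \<Rightarrow> IS"

definition Gr :: "nat \<Rightarrow> nat \<Rightarrow> grade set" where
  "Gr l r = {g. \<forall>i\<ge>l+r. g i = Z}"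

definition grade0 :: grade where "grade0 = (\<lambda>i. Z)"

definition sG :: "nat \<Rightarrow> nat \<Rightarrow> grade \<Rightarrow> real" where
  "sG l r g = (\<Sum>i<l. hval (g i)) - (\<Sum>i\<in>{l..<l+r}. hval (g i))"

definition starG :: "grade \<Rightarrow> grade \<Rightarrow> grade set" where
  "starG g1 g2 = {g. \<forall>i. g i \<in> star1 (g1 i) (g2 i)}"

definition AG :: "grade \<Rightarrow> grade \<Rightarrow> grade \<Rightarrow> grade \<Rightarrow> grade set" where
  "AG g0 g1 g2 g3 = {g. \<forall>i. g i \<in> A1 (g0 i) (g1 i) (g2 i) (g3 i)}"

definition BG :: "nat \<Rightarrow> nat \<Rightarrow> grade \<Rightarrow> grade \<Rightarrow> grade \<Rightarrow> grade \<Rightarrow> grade \<Rightarrow> grade \<Rightarrow> complex" where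
  "BG l r g g' g0 g1 g2 g3 =
     (\<Prod>i<l. B1 (g i) (g' i) (g0 i) (g1 i) (g2 i) (g3 i)) *
     (\<Prod>i\<in>{l..<l+r}. cnj (B1 (g i) (g' i) (g0 i) (g1 i) (g2 i) (g3 i)))"

text \<open>A graded algebra is given by: a complex vector space structure (scalar
multiplication scl on the type 'v), a carrier subspace V, a family of subspaces
Sg indexed by grades (zero outside Gr l r) whose direct sum is V, a product and
a unit.\<close>

definition decomp :: "nat \<Rightarrow> nat \<Rightarrow> (grade \<Rightarrow> 'v::ab_group_add set) \<Rightarrow> 'v \<Rightarrow> grade \<Rightarrow> 'v" where
  "decomp l r Sg x = (THE f. (\<forall>g\<in>Gr l r. f g \<in> Sg g) \<and> (\<forall>g. g \<notin> Gr l r \<longrightarrow> f g = 0)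
                          \<and> x = (\<Sum>g\<in>Gr l r. f g))"

(* a \<cdot>_g b := comp l r Sg g (mult a b) *)
definition comp :: "nat \<Rightarrow> nat \<Rightarrow> (grade \<Rightarrow> 'v::ab_group_add set) \<Rightarrow> grade \<Rightarrow> 'v \<Rightarrow> 'v" where
  "comp l r Sg g x = decomp l r Sg x g"

definition graded_space ::
  "(complex \<Rightarrow> 'v::ab_group_add \<Rightarrow> 'v) \<Rightarrow> nat \<Rightarrow> nat \<Rightarrow> 'v set \<Rightarrow> (grade \<Rightarrow> 'v set) \<Rightarrow> bool" where
  "graded_space scl l r V Sg \<longleftrightarrow>
     Vector_Spaces.vector_space scl \<and>
     module.subspace scl V \<and>
     (\<forall>g. module.subspace scl (Sg g) \<and> Sg g \<subseteq> V) \<and>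
     (\<forall>g. g \<notin> Gr l r \<longrightarrow> Sg g = {0}) \<and>
     (\<forall>x\<in>V. \<exists>!f. (\<forall>g\<in>Gr l r. f g \<in> Sg g) \<and> (\<forall>g. g \<notin> Gr l r \<longrightarrow> f g = 0)
                    \<and> x = (\<Sum>g\<in>Gr l r. f g)) \<and>
     (\<exists>Bs. finite Bs \<and> Bs \<subseteq> V \<and> module.span scl Bs = V)"

definition bilinear_on ::
  "(complex \<Rightarrow> 'v::ab_group_add \<Rightarrow> 'v) \<Rightarrow> 'v set \<Rightarrow> ('v \<Rightarrow> 'v \<Rightarrow> 'v) \<Rightarrow> bool" where
  "bilinear_on scl V mult \<longleftrightarrow>
     (\<forall>a\<in>V. \<forall>b\<in>V. mult a b \<in> V) \<and>
     (\<forall>a\<in>V. \<forall>b\<in>V. \<forall>c\<in>V. mult (a + b) c = mult a c + mult b c \<and> mult a (b + c) = mult a b + mult a c) \<and>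
     (\<forall>a\<in>V. \<forall>b\<in>V. \<forall>k. mult (scl k a) b = scl k (mult a b) \<and> mult a (scl k b) = scl k (mult a b))"

definition framed_algebra ::
  "(complex \<Rightarrow> 'v::ab_group_add \<Rightarrow> 'v) \<Rightarrow> nat \<Rightarrow> nat \<Rightarrow> 'v set \<Rightarrow> (grade \<Rightarrow> 'v set)
     \<Rightarrow> ('v \<Rightarrow> 'v \<Rightarrow> 'v) \<Rightarrow> 'v \<Rightarrow> bool" where
  "framed_algebra scl l r V Sg mult one \<longleftrightarrow>
     graded_space scl l r V Sg \<and> bilinear_on scl V mult \<and>
     \<comment> \<open>FA1\<close>
     (\<forall>g\<in>Gr l r. sG l r g \<notin> \<int> \<longrightarrow> Sg g = {0}) \<and>
     \<comment> \<open>FA2\<close>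
     one \<noteq> 0 \<and> Sg grade0 = module.span scl {one} \<and>
     (\<forall>a\<in>V. mult one a = a \<and> mult a one = a) \<and>
     \<comment> \<open>FA3\<close>
     (\<forall>g1\<in>Gr l r. \<forall>g2\<in>Gr l r. \<forall>a\<in>Sg g1. \<forall>b\<in>Sg g2. \<forall>g\<in>Gr l r.
         g \<notin> starG g1 g2 \<longrightarrow> comp l r Sg g (mult a b) = 0) \<and>
     \<comment> \<open>FA4\<close>
     (\<forall>g0\<in>Gr l r. \<forall>g1\<in>Gr l r. \<forall>g2\<in>Gr l r. \<forall>g3\<in>Gr l r.
       \<forall>a1\<in>Sg g1. \<forall>a2\<in>Sg g2. \<forall>a3\<in>Sg g3. \<forall>g'\<in>AG g0 g2 g1 g3.
         comp l r Sg g0 (mult a2 (comp l r Sg g' (mult a1 a3))) =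
         (\<Sum>g\<in>AG g0 g1 g2 g3. scl (BG l r g g' g0 g1 g2 g3)
              (comp l r Sg g0 (mult a1 (comp l r Sg g (mult a2 a3))))))"

definition is_ideal ::
  "(complex \<Rightarrow> 'v::ab_group_add \<Rightarrow> 'v) \<Rightarrow> nat \<Rightarrow> nat \<Rightarrow> 'v set \<Rightarrow> (grade \<Rightarrow> 'v set)
     \<Rightarrow> ('v \<Rightarrow> 'v \<Rightarrow> 'v) \<Rightarrow> 'v set \<Rightarrow> bool" where
  "is_ideal scl l r V Sg mult M \<longleftrightarrow>
     module.subspace scl M \<and> M \<subseteq> V \<and>
     (\<forall>x\<in>M. \<forall>g. comp l r Sg g x \<in> M) \<and>   \<comment> \<open>graded\<close>
     (\<forall>a\<in>V. \<forall>m\<in>M. mult a m \<in> M)"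

definition simple_framed ::
  "(complex \<Rightarrow> 'v::ab_group_add \<Rightarrow> 'v) \<Rightarrow> nat \<Rightarrow> nat \<Rightarrow> 'v set \<Rightarrow> (grade \<Rightarrow> 'v set)
     \<Rightarrow> ('v \<Rightarrow> 'v \<Rightarrow> 'v) \<Rightarrow> bool" where
  "simple_framed scl l r V Sg mult \<longleftrightarrow>
     (\<forall>M. is_ideal scl l r V Sg mult M \<longrightarrow> M = {0} \<or> M = V)"

type_synonym codeword = "nat \<Rightarrow> bool"

definition Cw :: "nat \<Rightarrow> codeword set" where
  "Cw n = {\<alpha>. \<forall>i\<ge>n. \<not> \<alpha> i}"

definition czero :: codeword where "czero = (\<lambda>i. False)"

definition cadd :: "codeword \<Rightarrow> codeword \<Rightarrow> codeword" where
  "cadd \<alpha> \<beta> = (\<lambda>i. \<alpha> i \<noteq> \<beta> i)"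

definition cmul :: "codeword \<Rightarrow> codeword \<Rightarrow> codeword" where
  "cmul \<alpha> \<beta> = (\<lambda>i. \<alpha> i \<and> \<beta> i)"

definition wt :: "nat \<Rightarrow> nat \<Rightarrow> codeword \<Rightarrow> int" where
  "wt l r \<alpha> = int (card {i. i < l \<and> \<alpha> i}) - int (card {i. l \<le> i \<and> i < l + r \<and> \<alpha> i})"

(* identification of (d,c) with dc = 0 with an element of IS^(l,r) *)
definition toGrade :: "codeword \<Rightarrow> codeword \<Rightarrow> grade" where
  "toGrade d c = (\<lambda>i. if d i then S else if c i then H else Z)"

definition even_code :: "nat \<Rightarrow> nat \<Rightarrow> codeword set \<Rightarrow> bool" where
  "even_code l r C \<longleftrightarrow> C \<subseteq> Cw (l + r) \<and> czero \<in> C \<and>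
     (\<forall>\<alpha>\<in>C. \<forall>\<beta>\<in>C. cadd \<alpha> \<beta> \<in> C) \<and> (\<forall>\<alpha>\<in>C. even (wt l r \<alpha>))"

definition struct_code_C :: "nat \<Rightarrow> nat \<Rightarrow> (grade \<Rightarrow> 'v::zero set) \<Rightarrow> codeword set" where
  "struct_code_C l r Sg = {\<alpha>\<in>Cw (l + r). Sg (toGrade czero \<alpha>) \<noteq> {0}}"

definition struct_code_D :: "nat \<Rightarrow> nat \<Rightarrow> (grade \<Rightarrow> 'v::zero set) \<Rightarrow> codeword set" where
  "struct_code_D l r Sg = {d\<in>Cw (l + r). \<exists>c\<in>Cw (l + r). cmul d c = czero \<and> Sg (toGrade d c) \<noteq> {0}}"

text \<open>Elements are functions codeword \<Rightarrow> complex supported on C (coefficients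
w.r.t. the basis e_\<alpha>); e_\<alpha> e_\<beta> = \<epsilon>(\<alpha>,\<beta>) e_{\<alpha>+\<beta>}.\<close>

definition cscale :: "complex \<Rightarrow> (codeword \<Rightarrow> complex) \<Rightarrow> (codeword \<Rightarrow> complex)" where
  "cscale k f = (\<lambda>x. k * f x)"

definition tw_space :: "codeword set \<Rightarrow> (codeword \<Rightarrow> complex) set" where
  "tw_space C = {f. \<forall>\<alpha>. \<alpha> \<notin> C \<longrightarrow> f \<alpha> = 0}"

definition tw_basis :: "codeword \<Rightarrow> (codeword \<Rightarrow> complex)" where
  "tw_basis \<alpha> = (\<lambda>\<beta>. if \<beta> = \<alpha> then 1 else 0)"

definition tw_mult :: "codeword set \<Rightarrow> (codeword \<Rightarrow> codeword \<Rightarrow> int)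
     \<Rightarrow> (codeword \<Rightarrow> complex) \<Rightarrow> (codeword \<Rightarrow> complex) \<Rightarrow> (codeword \<Rightarrow> complex)" where
  "tw_mult C \<epsilon> f g = (\<lambda>\<gamma>. if \<gamma> \<in> C then
       (\<Sum>\<alpha>\<in>C. of_int (\<epsilon> \<alpha> (cadd \<alpha> \<gamma>)) * f \<alpha> * g (cadd \<alpha> \<gamma>)) else 0)"

(* S_g = span of the e_\<alpha>, \<alpha> \<in> C, of degree (0,\<alpha>) = g *)
definition tw_grading :: "codeword set \<Rightarrow> grade \<Rightarrow> (codeword \<Rightarrow> complex) set" where
  "tw_grading C g = {f \<in> tw_space C. \<forall>\<alpha>. toGrade czero \<alpha> \<noteq> g \<longrightarrow> f \<alpha> = 0}"

end

theory Submission
  imports Defs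
begin


definition sng :: "codeword \<Rightarrow> complex \<Rightarrow> codeword \<Rightarrow> complex" where
  "sng \<alpha> c = (\<lambda>\<beta>. if \<beta> = \<alpha> then c else 0)"

definition hb :: "bool \<Rightarrow> IS" where "hb b = (if b then H else Z)"

lemma toGrade0: "toGrade czero \<alpha> i = hb (\<alpha> i)"
  by (simp add: toGrade_def czero_def hb_def)

lemma toGrade0_inj: "toGrade czero \<alpha> = toGrade czero \<beta> \<Longrightarrow> \<alpha> = \<beta>"
proof (rule ext)
  fix i assume "toGrade czero \<alpha> = toGrade czero \<beta>"
  hence "hb (\<alpha> i) = hb (\<beta> i)" by (metis toGrade0)
  thus "\<alpha> i = \<beta> i" by (auto simp: hb_def split: if_splits)
qed

lemma star1_hb: "star1 (hb x) (hb y) = {hb (x \<noteq> y)}"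
  by (cases x; cases y) (auto simp: hb_def)

lemma A1_hb: "A1 h0 (hb x) (hb y) (hb z) = (if h0 = hb (x \<noteq> (y \<noteq> z)) then {hb (y \<noteq> z)} else {})"
  by (cases x; cases y; cases z; cases h0) (auto simp: A1_def hb_def)

lemma B1_hb: "B1 h h' a (hb x) (hb y) a' = (if x \<and> y then -1 else 1)"
  by (cases x; cases y) (auto simp: hb_def)

lemma UNIV_IS: "(UNIV :: IS set) = {Z,H,S}"
  using IS.exhaust by auto

lemma finite_Gr: "finite (Gr l r)"
proof -
  have "Gr l r = {f. \<forall>x. (x \<in> {..<l+r} \<longrightarrow> f x \<in> UNIV) \<and> (x \<notin> {..<l+r} \<longrightarrow> f x = Z)}"
    by (auto simp: Gr_def)
  moreover have "finite (UNIV :: IS set)" unfolding UNIV_IS by simp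
  ultimately show ?thesis using finite_set_of_finite_funs[of "{..<l+r}" "UNIV :: IS set" Z] by simp
qed

lemma finite_Cw: "finite (Cw n)"
proof -
  have "Cw n = {f. \<forall>x. (x \<in> {..<n} \<longrightarrow> f x \<in> UNIV) \<and> (x \<notin> {..<n} \<longrightarrow> f x = False)}"
    by (auto simp: Cw_def)
  thus ?thesis using finite_set_of_finite_funs[of "{..<n}" "UNIV :: bool set" False] by simp
qed

lemma sum_app: "(sum f A) x = sum (\<lambda>a. f a x) A"
  by (induction A rule: infinite_finite_induct) auto

lemma toGrade0_Gr: "\<alpha> \<in> Cw (l+r) \<Longrightarrow> toGrade czero \<alpha> \<in> Gr l r"
  by (auto simp: Cw_def Gr_def toGrade_def czero_def)

lemma cadd_assoc: "cadd \<alpha> (cadd \<beta> \<gamma>) = cadd \<beta> (cadd \<alpha> \<gamma>)"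
  by (auto simp: cadd_def)

lemma cadd_cancel: "cadd \<alpha> (cadd \<alpha> \<beta>) = \<beta>" by (auto simp: cadd_def)
lemma cadd_self: "cadd \<alpha> \<alpha> = czero" by (auto simp: cadd_def czero_def)
lemma cadd_zero: "cadd czero \<alpha> = \<alpha>" "cadd \<alpha> czero = \<alpha>" by (auto simp: cadd_def czero_def)
lemma cadd_eq_iff: "(cadd \<alpha> \<gamma> = \<beta>) = (\<gamma> = cadd \<alpha> \<beta>)" by (auto simp: cadd_def)

lemma pm1_parity: "(-1::int) ^ nat \<bar>int a - int b\<bar> = (-1) ^ (a + b)"
proof -
  have "even (nat \<bar>int a - int b\<bar>) = even (a + b)"
    by (cases "a \<le> b") (auto simp: nat_diff_distrib)
  thus ?thesis by (simp add: minus_one_power_iff)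
qed

lemma prod_pm1: "finite A \<Longrightarrow> (\<Prod>i\<in>A. if P i then (-1::complex) else 1) = (-1) ^ card {i\<in>A. P i}"
  by (simp add: prod.If_cases Collect_conj_eq Int_commute inf_set_def)



interpretation cs: Vector_Spaces.vector_space cscale
  by unfold_locales (auto simp: cscale_def algebra_simps)

abbreviation "TG \<equiv> toGrade czero"

locale twctx =
  fixes l r :: nat and C :: "codeword set" and \<epsilon> :: "codeword \<Rightarrow> codeword \<Rightarrow> int"
  assumes ev: "even_code l r C"
    and pm: "\<forall>\<alpha>\<in>C. \<forall>\<beta>\<in>C. \<epsilon> \<alpha> \<beta> \<in> {1, -1}"
    and bim: "\<forall>\<alpha>\<in>C. \<forall>\<beta>\<in>C. \<forall>\<gamma>\<in>C. \<epsilon> (cadd \<alpha> \<beta>) \<gamma> = \<epsilon> \<alpha> \<gamma> * \<epsilon> \<beta> \<gamma>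
                          \<and> \<epsilon> \<alpha> (cadd \<beta> \<gamma>) = \<epsilon> \<alpha> \<beta> * \<epsilon> \<alpha> \<gamma>"
    and com: "\<forall>\<alpha>\<in>C. \<forall>\<beta>\<in>C. \<epsilon> \<alpha> \<beta> * \<epsilon> \<beta> \<alpha> = (-1) ^ nat \<bar>wt l r (cmul \<alpha> \<beta>)\<bar>"
begin

lemma CCw: "C \<subseteq> Cw (l+r)" using ev by (simp add: even_code_def)
lemma finC: "finite C" using CCw finite_Cw finite_subset by blast
lemma zC: "czero \<in> C" using ev by (simp add: even_code_def)
lemma addC: "\<alpha> \<in> C \<Longrightarrow> \<beta> \<in> C \<Longrightarrow> cadd \<alpha> \<beta> \<in> C" using ev by (simp add: even_code_def)
lemma TGr: "\<alpha> \<in> C \<Longrightarrow> TG \<alpha> \<in> Gr l r" using CCw toGrade0_Gr by blast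

lemma eps_zero: "\<gamma> \<in> C \<Longrightarrow> \<epsilon> czero \<gamma> = 1" "\<gamma> \<in> C \<Longrightarrow> \<epsilon> \<gamma> czero = 1"
proof -
  assume g: "\<gamma> \<in> C"
  have "\<epsilon> czero \<gamma> = \<epsilon> czero \<gamma> * \<epsilon> czero \<gamma>" using bim zC g by (metis cadd_zero(1))
  moreover have "\<epsilon> \<gamma> czero = \<epsilon> \<gamma> czero * \<epsilon> \<gamma> czero" using bim zC g by (metis cadd_zero(1))
  moreover have "\<epsilon> czero \<gamma> \<in> {1,-1}" "\<epsilon> \<gamma> czero \<in> {1,-1}" using pm zC g by blast+
  ultimately show "\<epsilon> czero \<gamma> = 1" "\<epsilon> \<gamma> czero = 1" by auto
qed

abbreviation "V \<equiv> tw_space C"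
abbreviation "Sg \<equiv> tw_grading C"
abbreviation "mult \<equiv> tw_mult C \<epsilon>"

definition pf :: "(codeword \<Rightarrow> complex) \<Rightarrow> grade \<Rightarrow> codeword \<Rightarrow> complex" where
  "pf x g = (\<lambda>\<beta>. if TG \<beta> = g then x \<beta> else 0)"

definition Pd :: "(codeword \<Rightarrow> complex) \<Rightarrow> (grade \<Rightarrow> codeword \<Rightarrow> complex) \<Rightarrow> bool" where
  "Pd x f \<longleftrightarrow> (\<forall>g\<in>Gr l r. f g \<in> Sg g) \<and> (\<forall>g. g \<notin> Gr l r \<longrightarrow> f g = 0) \<and> x = (\<Sum>g\<in>Gr l r. f g)"

lemma Pd_pf: assumes x: "x \<in> V" shows "Pd x (pf x)"
proof -
  have a: "\<forall>g\<in>Gr l r. pf x g \<in> Sg g" using x by (auto simp: pf_def tw_grading_def tw_space_def)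
  have b: "\<forall>g. g \<notin> Gr l r \<longrightarrow> pf x g = 0"
  proof (intro allI impI ext)
    fix g \<beta> assume g: "g \<notin> Gr l r"
    show "pf x g \<beta> = 0 \<beta>"
    proof (cases "\<beta> \<in> C")
      case True thus ?thesis using TGr[OF True] g by (auto simp: pf_def)
    next
      case False thus ?thesis using x by (simp add: pf_def tw_space_def)
    qed
  qed
  have c: "x = (\<Sum>g\<in>Gr l r. pf x g)"
  proof
    fix \<beta>
    have "(\<Sum>g\<in>Gr l r. pf x g) \<beta> = (\<Sum>g\<in>Gr l r. if TG \<beta> = g then x \<beta> else 0)"
      by (simp add: sum_app pf_def)
    also have "\<dots> = (if TG \<beta> \<in> Gr l r then x \<beta> else 0)" using finite_Gr by (simp add: sum.delta)
    also have "\<dots> = x \<beta>" using x TGr by (auto simp: tw_space_def)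
    finally show "x \<beta> = (\<Sum>g\<in>Gr l r. pf x g) \<beta>" by simp
  qed
  show ?thesis using a b c by (simp add: Pd_def)
qed

lemma Pd_unique: assumes x: "x \<in> V" and P: "Pd x f" shows "f = pf x"
proof
  fix g
  show "f g = pf x g"
  proof (cases "g \<in> Gr l r")
    case False
    have "f g = 0" using P False unfolding Pd_def by blast
    moreover have "pf x g = 0" using Pd_pf[OF x] False unfolding Pd_def by blast
    ultimately show ?thesis by simp
  next
    case True
    show ?thesis
    proof
      fix \<beta>
      have fz: "\<And>g'. g' \<in> Gr l r \<Longrightarrow> f g' \<beta> = (if TG \<beta> = g' then f g' \<beta> else 0)"
      proof -
        fix g' assume "g' \<in> Gr l r"
        hence "f g' \<in> Sg g'" using P unfolding Pd_def by blast
        thus "f g' \<beta> = (if TG \<beta> = g' then f g' \<beta> else 0)" by (simp add: tw_grading_def)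
      qed
      have "x = (\<Sum>g'\<in>Gr l r. f g')" using P unfolding Pd_def by blast
      hence "x \<beta> = (\<Sum>g'\<in>Gr l r. f g') \<beta>" by simp
      also have "\<dots> = (\<Sum>g'\<in>Gr l r. f g' \<beta>)" by (rule sum_app)
      also have "\<dots> = (\<Sum>g'\<in>Gr l r. if TG \<beta> = g' then f g' \<beta> else 0)"
        by (rule sum.cong[OF refl]) (erule fz)
      also have "\<dots> = (if TG \<beta> \<in> Gr l r then f (TG \<beta>) \<beta> else 0)" using finite_Gr by (simp add: sum.delta)
      finally have xb: "x \<beta> = (if TG \<beta> \<in> Gr l r then f (TG \<beta>) \<beta> else 0)" .
      show "f g \<beta> = pf x g \<beta>"
      proof (cases "TG \<beta> = g")
        case True thus ?thesis using xb \<open>g \<in> Gr l r\<close> by (simp add: pf_def)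
      next
        case False
        have "f g \<beta> = 0" using fz[OF True] False by simp
        thus ?thesis using False by (simp add: pf_def)
      qed
    qed
  qed
qed

lemma comp_V: "x \<in> V \<Longrightarrow> comp l r Sg g x = pf x g"
proof -
  assume x: "x \<in> V"
  have "(THE f. Pd x f) = pf x"
    by (rule the_equality[where P="Pd x", OF Pd_pf[OF x] Pd_unique[OF x]])
  hence "(THE f. Pd x f) g = pf x g" by simp
  thus ?thesis unfolding comp_def decomp_def Pd_def .
qed

lemma zero_V[simp]: "0 \<in> V" by (simp add: tw_space_def)
lemma comp0[simp]: "comp l r Sg g 0 = 0"
proof -
  have "pf 0 g = 0" unfolding pf_def by (rule ext) simp
  thus ?thesis by (simp add: comp_V)
qed

lemma mult_V[simp]: "mult a b \<in> V" by (simp add: tw_mult_def tw_space_def)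
lemma mult0[simp]: "mult 0 b = 0" "mult a 0 = 0" unfolding tw_mult_def by (rule ext, simp)+

lemma sng_V: "\<alpha> \<in> C \<Longrightarrow> sng \<alpha> c \<in> V" by (auto simp: sng_def tw_space_def)

lemma mult_sng: assumes "\<alpha> \<in> C" "\<beta> \<in> C"
  shows "mult (sng \<alpha> a) (sng \<beta> b) = sng (cadd \<alpha> \<beta>) (of_int (\<epsilon> \<alpha> \<beta>) * a * b)"
proof
  fix \<gamma>
  show "mult (sng \<alpha> a) (sng \<beta> b) \<gamma> = sng (cadd \<alpha> \<beta>) (of_int (\<epsilon> \<alpha> \<beta>) * a * b) \<gamma>"
  proof (cases "\<gamma> \<in> C")
    case True
    have "mult (sng \<alpha> a) (sng \<beta> b) \<gamma> = (\<Sum>a'\<in>C. if a' = \<alpha> then of_int (\<epsilon> \<alpha> (cadd \<alpha> \<gamma>)) * a * sng \<beta> b (cadd \<alpha> \<gamma>) else 0)"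
      using True by (auto simp: tw_mult_def sng_def intro!: sum.cong)
    also have "\<dots> = of_int (\<epsilon> \<alpha> (cadd \<alpha> \<gamma>)) * a * sng \<beta> b (cadd \<alpha> \<gamma>)"
      using finC assms by (simp add: sum.delta)
    also have "\<dots> = sng (cadd \<alpha> \<beta>) (of_int (\<epsilon> \<alpha> \<beta>) * a * b) \<gamma>"
      by (cases "\<gamma> = cadd \<alpha> \<beta>") (auto simp: sng_def cadd_eq_iff cadd_cancel)
    finally show ?thesis .
  next
    case False
    hence "cadd \<alpha> \<beta> \<noteq> \<gamma>" using addC assms by auto
    thus ?thesis using False by (simp add: tw_mult_def sng_def)
  qed
qed

lemma comp_sng: assumes "\<alpha> \<in> C" shows "comp l r Sg g (sng \<alpha> c) = (if TG \<alpha> = g then sng \<alpha> c else 0)"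
proof -
  have "pf (sng \<alpha> c) g = (if TG \<alpha> = g then sng \<alpha> c else 0)"
    unfolding pf_def sng_def by (rule ext) auto
  thus ?thesis by (simp add: comp_V sng_V assms)
qed

lemma Sg_cases: assumes "f \<in> Sg g"
  obtains "f = 0" | \<alpha> where "\<alpha> \<in> C" "g = TG \<alpha>" "f = sng \<alpha> (f \<alpha>)"
proof (cases "f = 0")
  case False
  then obtain \<beta> where b: "f \<beta> \<noteq> 0" by (auto simp: fun_eq_iff)
  hence bC: "\<beta> \<in> C" and gb: "TG \<beta> = g" using assms by (auto simp: tw_grading_def tw_space_def)
  have "f = sng \<beta> (f \<beta>)"
  proof
    fix \<gamma> show "f \<gamma> = sng \<beta> (f \<beta>) \<gamma>"
      using assms gb toGrade0_inj by (auto simp: sng_def tw_grading_def)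
  qed
  thus ?thesis using that(2)[OF bC gb[symmetric]] by simp
next
  case True thus ?thesis using that(1) by simp
qed

lemma sng_Sg: "\<alpha> \<in> C \<Longrightarrow> sng \<alpha> c \<in> Sg (TG \<alpha>)"
  unfolding tw_grading_def using sng_V by (auto simp: sng_def)

lemma Sg_V: "Sg g \<subseteq> V" by (auto simp: tw_grading_def)

end


lemma tw_basis_sng: "tw_basis \<alpha> = sng \<alpha> 1" by (simp add: tw_basis_def sng_def)
lemma cscale_sng: "cscale k (sng \<alpha> c) = sng \<alpha> (k * c)" by (auto simp: cscale_def sng_def)

lemma sum_if_const: "finite A \<Longrightarrow> (\<Sum>i\<in>A. if P i then (c::real) else 0) = of_nat (card {i\<in>A. P i}) * c"
  by (simp add: sum.inter_filter[symmetric])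

context twctx begin

lemma subspace_V: "module.subspace cscale V"
  by (rule cs.subspaceI) (auto simp: tw_space_def cscale_def)

lemma subspace_Sg: "module.subspace cscale (Sg g)"
  by (rule cs.subspaceI) (auto simp: tw_grading_def tw_space_def cscale_def)

lemma Sg_out: "g \<notin> Gr l r \<Longrightarrow> Sg g = {0}"
proof -
  assume g: "g \<notin> Gr l r"
  { fix f assume f: "f \<in> Sg g"
    have "f = 0"
    proof (cases rule: Sg_cases[OF f])
      case (2 \<alpha>) thus ?thesis using TGr g by auto
    qed }
  moreover have "0 \<in> Sg g" using subspace_Sg cs.subspace_0 by blast
  ultimately show ?thesis by blast
qed

lemma V_span: "module.span cscale (tw_basis ` C) = V"
proof (rule cs.span_subspace)
  show "tw_basis ` C \<subseteq> V" using sng_V by (auto simp: tw_basis_sng)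
  show "module.subspace cscale V" by (rule subspace_V)
  show "V \<subseteq> module.span cscale (tw_basis ` C)"
  proof
    fix x assume x: "x \<in> V"
    have "x = (\<Sum>\<alpha>\<in>C. cscale (x \<alpha>) (tw_basis \<alpha>))"
    proof
      fix \<beta>
      have "(\<Sum>\<alpha>\<in>C. cscale (x \<alpha>) (tw_basis \<alpha>)) \<beta> = (\<Sum>\<alpha>\<in>C. if \<beta> = \<alpha> then x \<alpha> else 0)"
        by (simp add: sum_app cscale_def tw_basis_def if_distrib cong: if_cong)
      also have "\<dots> = x \<beta>" using finC x by (simp add: sum.delta tw_space_def)
      finally show "x \<beta> = (\<Sum>\<alpha>\<in>C. cscale (x \<alpha>) (tw_basis \<alpha>)) \<beta>" by simp
    qed
    also have "\<dots> \<in> module.span cscale (tw_basis ` C)"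
      by (intro cs.span_sum cs.span_scale cs.span_base) auto
    finally show "x \<in> module.span cscale (tw_basis ` C)" .
  qed
qed

lemma graded: "graded_space cscale l r V Sg"
  unfolding graded_space_def
proof (intro conjI allI impI ballI)
  show "Vector_Spaces.vector_space cscale" by unfold_locales (auto simp: cscale_def algebra_simps)
  show "module.subspace cscale V" by (rule subspace_V)
  fix g show "module.subspace cscale (Sg g)" by (rule subspace_Sg)
  show "Sg g \<subseteq> V" by (rule Sg_V)
next
  fix g :: grade assume "g \<notin> Gr l r" thus "Sg g = {0}" by (rule Sg_out)
next
  fix x assume x: "x \<in> V"
  show "\<exists>!f. (\<forall>g\<in>Gr l r. f g \<in> Sg g) \<and> (\<forall>g. g \<notin> Gr l r \<longrightarrow> f g = 0) \<and> x = (\<Sum>g\<in>Gr l r. f g)"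
    using Pd_pf[OF x] Pd_unique[OF x] unfolding Pd_def by blast
next
  show "\<exists>Bs. finite Bs \<and> Bs \<subseteq> V \<and> module.span cscale Bs = V"
    using V_span finC sng_V by (intro exI[of _ "tw_basis ` C"]) (auto simp: tw_basis_sng)
qed

lemma bilin: "bilinear_on cscale V mult"
  unfolding bilinear_on_def
proof (intro conjI ballI allI)
  fix a b c :: "codeword \<Rightarrow> complex" and k :: complex
  show "mult a b \<in> V" by simp
  show "mult (a + b) c = mult a c + mult b c"
    by (rule ext) (simp add: tw_mult_def sum.distrib algebra_simps)
  show "mult a (b + c) = mult a b + mult a c"
    by (rule ext) (simp add: tw_mult_def sum.distrib algebra_simps)
  show "mult (cscale k a) b = cscale k (mult a b)"
    by (rule ext) (simp add: tw_mult_def cscale_def sum_distrib_left algebra_simps)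
  show "mult a (cscale k b) = cscale k (mult a b)"
    by (rule ext) (simp add: tw_mult_def cscale_def sum_distrib_left algebra_simps)
qed

lemma sG_TG: "sG l r (TG \<alpha>) = real_of_int (wt l r \<alpha>) / 2"
proof -
  have h: "\<And>i. hval (TG \<alpha> i) = (if \<alpha> i then 1/2 else 0)" by (simp add: toGrade0 hb_def)
  have e1: "{i\<in>{..<l}. \<alpha> i} = {i. i < l \<and> \<alpha> i}" by auto
  have e2: "{i\<in>{l..<l+r}. \<alpha> i} = {i. l \<le> i \<and> i < l + r \<and> \<alpha> i}" by auto
  show ?thesis unfolding sG_def h wt_def
    by (simp add: sum_if_const e1 e2)
qed

lemma FA1: "\<forall>g\<in>Gr l r. sG l r g \<notin> \<int> \<longrightarrow> Sg g = {0}"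
proof (intro ballI impI)
  fix g assume g: "g \<in> Gr l r" "sG l r g \<notin> \<int>"
  { fix f assume f: "f \<in> Sg g"
    have "f = 0"
    proof (cases rule: Sg_cases[OF f])
      case (2 \<alpha>)
      then obtain k where "wt l r \<alpha> = 2 * k" using ev by (auto simp: even_code_def elim!: evenE)
      hence "sG l r g = of_int k" using 2 sG_TG[of \<alpha>] by simp
      thus ?thesis using g by auto
    qed }
  moreover have "0 \<in> Sg g" using subspace_Sg cs.subspace_0 by blast
  ultimately show "Sg g = {0}" by blast
qed

lemma TG_zero: "TG czero = grade0" by (simp add: toGrade_def grade0_def czero_def)

lemma one_left: "a \<in> V \<Longrightarrow> mult (tw_basis czero) a = a"
proof
  fix \<gamma> assume a: "a \<in> V"
  show "mult (tw_basis czero) a \<gamma> = a \<gamma>"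
  proof (cases "\<gamma> \<in> C")
    case True
    have "mult (tw_basis czero) a \<gamma> = (\<Sum>\<alpha>\<in>C. if \<alpha> = czero then of_int (\<epsilon> czero \<gamma>) * a \<gamma> else 0)"
      using True by (auto simp: tw_mult_def tw_basis_def cadd_zero intro!: sum.cong)
    also have "\<dots> = a \<gamma>" using finC zC eps_zero True by (simp add: sum.delta)
    finally show ?thesis .
  next
    case False thus ?thesis using a by (simp add: tw_mult_def tw_space_def)
  qed
qed

lemma one_right: "a \<in> V \<Longrightarrow> mult a (tw_basis czero) = a"
proof
  fix \<gamma> assume a: "a \<in> V"
  show "mult a (tw_basis czero) \<gamma> = a \<gamma>"
  proof (cases "\<gamma> \<in> C")
    case True
    have "mult a (tw_basis czero) \<gamma> = (\<Sum>\<alpha>\<in>C. if \<alpha> = \<gamma> then of_int (\<epsilon> \<gamma> czero) * a \<gamma> else 0)"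
      using True by (auto simp: tw_mult_def tw_basis_def cadd_self cadd_eq_iff cadd_zero intro!: sum.cong)
    also have "\<dots> = a \<gamma>" using finC eps_zero True by (simp add: sum.delta)
    finally show ?thesis .
  next
    case False thus ?thesis using a by (simp add: tw_mult_def tw_space_def)
  qed
qed

lemma Sg0: "Sg grade0 = module.span cscale {tw_basis czero}"
  unfolding cs.span_singleton
proof (intro set_eqI iffI)
  fix f assume f: "f \<in> Sg grade0"
  show "f \<in> range (\<lambda>k. cscale k (tw_basis czero))"
  proof (cases rule: Sg_cases[OF f])
    case 1 thus ?thesis by (auto intro!: image_eqI[of _ _ 0] simp: cscale_def fun_eq_iff)
  next
    case (2 \<alpha>)
    hence "\<alpha> = czero" using TG_zero toGrade0_inj by metis
    thus ?thesis using 2 by (auto intro!: image_eqI[of _ _ "f czero"] simp: tw_basis_sng cscale_sng)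
  qed
next
  fix f assume "f \<in> range (\<lambda>k. cscale k (tw_basis czero))"
  then obtain k where "f = sng czero k" by (auto simp: tw_basis_sng cscale_sng)
  thus "f \<in> Sg grade0" using sng_Sg[OF zC] TG_zero by simp
qed


lemma cscale0[simp]: "cscale k 0 = 0" by (simp add: cscale_def fun_eq_iff)

lemma Sg_cases2: assumes "f \<in> Sg g"
  obtains "f = 0" | \<alpha> c where "\<alpha> \<in> C" "g = TG \<alpha>" "f = sng \<alpha> c"
  using Sg_cases[OF assms] by metis

lemma TG_add_star: "TG (cadd \<alpha> \<beta>) \<in> starG (TG \<alpha>) (TG \<beta>)"
  by (simp add: starG_def toGrade0 star1_hb cadd_def)

lemma FA3: "\<forall>g1\<in>Gr l r. \<forall>g2\<in>Gr l r. \<forall>a\<in>Sg g1. \<forall>b\<in>Sg g2. \<forall>g\<in>Gr l r.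
         g \<notin> starG g1 g2 \<longrightarrow> comp l r Sg g (mult a b) = 0"
proof (intro ballI impI)
  fix g1 g2 a b g assume a: "a \<in> Sg g1" and b: "b \<in> Sg g2" and g: "g \<notin> starG g1 g2"
  show "comp l r Sg g (mult a b) = 0"
  proof (cases rule: Sg_cases2[OF a])
    case 1 thus ?thesis by simp
  next
    case (2 \<alpha> c)
    note A = this
    show ?thesis
    proof (cases rule: Sg_cases2[OF b])
      case 1 thus ?thesis by simp
    next
      case (2 \<beta> d)
      note B = this
      have "TG (cadd \<alpha> \<beta>) \<noteq> g" using g TG_add_star A B by auto
      thus ?thesis using A B by (simp add: mult_sng comp_sng addC)
    qed
  qed
qed

lemma cnj_if: "cnj (if P then -1 else 1) = (if P then -1 else (1::complex))" by simp

lemma hb_inj: "hb x = hb y \<longleftrightarrow> x = y" by (auto simp: hb_def)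

lemma FA4: "\<forall>g0\<in>Gr l r. \<forall>g1\<in>Gr l r. \<forall>g2\<in>Gr l r. \<forall>g3\<in>Gr l r.
       \<forall>a1\<in>Sg g1. \<forall>a2\<in>Sg g2. \<forall>a3\<in>Sg g3. \<forall>g'\<in>AG g0 g2 g1 g3.
         comp l r Sg g0 (mult a2 (comp l r Sg g' (mult a1 a3))) =
         (\<Sum>g\<in>AG g0 g1 g2 g3. cscale (BG l r g g' g0 g1 g2 g3)
              (comp l r Sg g0 (mult a1 (comp l r Sg g (mult a2 a3)))))"
proof (intro ballI)
  fix g0 g1 g2 g3 a1 a2 a3 g'
  assume a1: "a1 \<in> Sg g1" and a2: "a2 \<in> Sg g2" and a3: "a3 \<in> Sg g3" and g': "g' \<in> AG g0 g2 g1 g3"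
  show "comp l r Sg g0 (mult a2 (comp l r Sg g' (mult a1 a3))) =
         (\<Sum>g\<in>AG g0 g1 g2 g3. cscale (BG l r g g' g0 g1 g2 g3)
              (comp l r Sg g0 (mult a1 (comp l r Sg g (mult a2 a3)))))"
  proof (cases "a1 = 0 \<or> a2 = 0 \<or> a3 = 0")
    case True thus ?thesis by auto
  next
    case False
    obtain \<alpha>1 c1 where A1: "\<alpha>1 \<in> C" "g1 = TG \<alpha>1" "a1 = sng \<alpha>1 c1"
      using Sg_cases2[OF a1] False by metis
    obtain \<alpha>2 c2 where A2: "\<alpha>2 \<in> C" "g2 = TG \<alpha>2" "a2 = sng \<alpha>2 c2"
      using Sg_cases2[OF a2] False by metis
    obtain \<alpha>3 c3 where A3: "\<alpha>3 \<in> C" "g3 = TG \<alpha>3" "a3 = sng \<alpha>3 c3"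
      using Sg_cases2[OF a3] False by metis
    have gi: "\<And>i. g0 i = hb (\<alpha>2 i \<noteq> (\<alpha>1 i \<noteq> \<alpha>3 i)) \<and> g' i = hb (\<alpha>1 i \<noteq> \<alpha>3 i)"
    proof -
      fix i
      have "g' i \<in> A1 (g0 i) (hb (\<alpha>2 i)) (hb (\<alpha>1 i)) (hb (\<alpha>3 i))"
        using g' A1 A2 A3 by (simp add: AG_def toGrade0)
      thus "g0 i = hb (\<alpha>2 i \<noteq> (\<alpha>1 i \<noteq> \<alpha>3 i)) \<and> g' i = hb (\<alpha>1 i \<noteq> \<alpha>3 i)"
        unfolding A1_hb by (simp split: if_splits)
    qed
    have g'eq: "g' = TG (cadd \<alpha>1 \<alpha>3)"
      by (rule ext) (simp add: gi toGrade0 cadd_def)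
    have g0eq: "g0 = TG (cadd \<alpha>1 (cadd \<alpha>2 \<alpha>3))"
      by (rule ext) (simp add: gi toGrade0 cadd_def hb_inj, blast)
    have AGeq: "AG g0 g1 g2 g3 = {TG (cadd \<alpha>2 \<alpha>3)}"
    proof -
      have "\<And>i. A1 (g0 i) (g1 i) (g2 i) (g3 i) = {hb (\<alpha>2 i \<noteq> \<alpha>3 i)}"
        using A1 A2 A3 by (simp add: toGrade0 A1_hb gi hb_inj, blast)
      hence "AG g0 g1 g2 g3 = {g. \<forall>i. g i = hb (\<alpha>2 i \<noteq> \<alpha>3 i)}" by (simp add: AG_def)
      also have "\<dots> = {TG (cadd \<alpha>2 \<alpha>3)}" by (auto simp: toGrade0 cadd_def)
      finally show ?thesis .
    qed
    define k where "k = card {i. i < l \<and> \<alpha>1 i \<and> \<alpha>2 i} + card {i. l \<le> i \<and> i < l + r \<and> \<alpha>1 i \<and> \<alpha>2 i}"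
    have BGeq: "BG l r g g' g0 g1 g2 g3 = (-1) ^ k" for g
    proof -
      have "BG l r g g' g0 g1 g2 g3 = (\<Prod>i<l. if \<alpha>1 i \<and> \<alpha>2 i then -1 else 1) *
          (\<Prod>i\<in>{l..<l+r}. if \<alpha>1 i \<and> \<alpha>2 i then -1 else (1::complex))"
        unfolding BG_def A1(2) A2(2) toGrade0 B1_hb cnj_if ..
      also have "\<dots> = (-1) ^ card {i\<in>{..<l}. \<alpha>1 i \<and> \<alpha>2 i} * (-1) ^ card {i\<in>{l..<l+r}. \<alpha>1 i \<and> \<alpha>2 i}"
        by (simp add: prod_pm1)
      also have "{i\<in>{..<l}. \<alpha>1 i \<and> \<alpha>2 i} = {i. i < l \<and> \<alpha>1 i \<and> \<alpha>2 i}" by auto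
      also have "{i\<in>{l..<l+r}. \<alpha>1 i \<and> \<alpha>2 i} = {i. l \<le> i \<and> i < l + r \<and> \<alpha>1 i \<and> \<alpha>2 i}" by auto
      finally show ?thesis by (simp add: k_def power_add)
    qed
    have wk: "\<epsilon> \<alpha>1 \<alpha>2 * \<epsilon> \<alpha>2 \<alpha>1 = (-1) ^ k"
    proof -
      have "wt l r (cmul \<alpha>1 \<alpha>2) = int (card {i. i < l \<and> \<alpha>1 i \<and> \<alpha>2 i}) - int (card {i. l \<le> i \<and> i < l + r \<and> \<alpha>1 i \<and> \<alpha>2 i})"
        by (simp add: wt_def cmul_def)
      thus ?thesis using com A1(1) A2(1) pm1_parity k_def by simp
    qed
    have e21: "\<epsilon> \<alpha>2 \<alpha>1 = (-1) ^ k * \<epsilon> \<alpha>1 \<alpha>2"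
    proof -
      have "\<epsilon> \<alpha>1 \<alpha>2 \<in> {1,-1}" using pm A1(1) A2(1) by blast
      hence "\<epsilon> \<alpha>1 \<alpha>2 * \<epsilon> \<alpha>1 \<alpha>2 = 1" by auto
      hence "(-1) ^ k * \<epsilon> \<alpha>1 \<alpha>2 = \<epsilon> \<alpha>2 \<alpha>1 * (\<epsilon> \<alpha>1 \<alpha>2 * \<epsilon> \<alpha>1 \<alpha>2)"
        using wk by (metis mult.assoc mult.commute)
      thus ?thesis using \<open>\<epsilon> \<alpha>1 \<alpha>2 * \<epsilon> \<alpha>1 \<alpha>2 = 1\<close> by simp
    qed
    have C13: "cadd \<alpha>1 \<alpha>3 \<in> C" "cadd \<alpha>2 \<alpha>3 \<in> C" using addC A1 A2 A3 by auto
    have TGeq: "TG (cadd \<alpha>2 (cadd \<alpha>1 \<alpha>3)) = g0" using g0eq cadd_assoc by metis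
    have LHS: "comp l r Sg g0 (mult a2 (comp l r Sg g' (mult a1 a3))) =
        sng (cadd \<alpha>1 (cadd \<alpha>2 \<alpha>3)) (of_int (\<epsilon> \<alpha>2 (cadd \<alpha>1 \<alpha>3)) * c2 * (of_int (\<epsilon> \<alpha>1 \<alpha>3) * c1 * c3))"
      using A1 A2 A3 C13 g'eq TGeq by (simp add: mult_sng comp_sng addC cadd_assoc)
    have RHS: "(\<Sum>g\<in>AG g0 g1 g2 g3. cscale (BG l r g g' g0 g1 g2 g3)
              (comp l r Sg g0 (mult a1 (comp l r Sg g (mult a2 a3))))) =
        sng (cadd \<alpha>1 (cadd \<alpha>2 \<alpha>3)) ((-1) ^ k * (of_int (\<epsilon> \<alpha>1 (cadd \<alpha>2 \<alpha>3)) * c1 * (of_int (\<epsilon> \<alpha>2 \<alpha>3) * c2 * c3)))"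
      unfolding AGeq sum.insert[OF finite.emptyI empty_iff[THEN iffD1, THEN notI[of _]]] BGeq
      using A1 A2 A3 C13 g0eq by (simp add: mult_sng comp_sng addC cscale_sng)
    have cf: "of_int (\<epsilon> \<alpha>2 (cadd \<alpha>1 \<alpha>3)) * c2 * (of_int (\<epsilon> \<alpha>1 \<alpha>3) * c1 * c3) =
        (-1) ^ k * (of_int (\<epsilon> \<alpha>1 (cadd \<alpha>2 \<alpha>3)) * c1 * (of_int (\<epsilon> \<alpha>2 \<alpha>3) * c2 * c3))"
      using bim A1(1) A2(1) A3(1) by (simp add: e21 algebra_simps)
    show ?thesis unfolding LHS RHS cf ..
  qed
qed

lemma Sg_TG_nz: "\<alpha> \<in> C \<Longrightarrow> Sg (TG \<alpha>) \<noteq> {0}"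
proof
  assume "\<alpha> \<in> C" "Sg (TG \<alpha>) = {0}"
  hence "sng \<alpha> 1 = 0" using sng_Sg by blast
  hence "sng \<alpha> 1 \<alpha> = 0" by simp
  thus False by (simp add: sng_def)
qed

lemma nz_in_Sg: assumes "Sg g \<noteq> {0}" obtains \<alpha> where "\<alpha> \<in> C" "g = TG \<alpha>"
proof -
  have "0 \<in> Sg g" using subspace_Sg cs.subspace_0 by blast
  then obtain f where f: "f \<in> Sg g" "f \<noteq> 0" using assms by blast
  show ?thesis using Sg_cases2[OF f(1)] f(2) that by metis
qed

lemma codeC: "struct_code_C l r Sg = C"
  unfolding struct_code_C_def
proof (intro set_eqI iffI)
  fix \<alpha> assume "\<alpha> \<in> {\<alpha> \<in> Cw (l + r). Sg (TG \<alpha>) \<noteq> {0}}"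
  then obtain \<beta> where "\<beta> \<in> C" "TG \<alpha> = TG \<beta>" using nz_in_Sg by blast
  thus "\<alpha> \<in> C" using toGrade0_inj by metis
next
  fix \<alpha> assume "\<alpha> \<in> C" thus "\<alpha> \<in> {\<alpha> \<in> Cw (l + r). Sg (TG \<alpha>) \<noteq> {0}}"
    using CCw Sg_TG_nz by auto
qed

lemma codeD: "struct_code_D l r Sg = {czero}"
  unfolding struct_code_D_def
proof (intro set_eqI iffI)
  fix d assume "d \<in> {d \<in> Cw (l + r). \<exists>c\<in>Cw (l + r). cmul d c = czero \<and> Sg (toGrade d c) \<noteq> {0}}"
  then obtain c where "Sg (toGrade d c) \<noteq> {0}" by blast
  then obtain \<beta> where "toGrade d c = TG \<beta>" using nz_in_Sg by blast
  hence "\<And>i. toGrade d c i = hb (\<beta> i)" by (simp add: toGrade0)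
  hence "\<And>i. \<not> d i" by (metis toGrade_def hb_def IS.distinct(4) IS.distinct(6))
  thus "d \<in> {czero}" by (auto simp: czero_def)
next
  fix d assume "d \<in> {czero}"
  moreover have "czero \<in> Cw (l + r)" by (simp add: Cw_def czero_def)
  moreover have "cmul czero czero = czero" by (simp add: cmul_def czero_def)
  ultimately show "d \<in> {d \<in> Cw (l + r). \<exists>c\<in>Cw (l + r). cmul d c = czero \<and> Sg (toGrade d c) \<noteq> {0}}"
    using Sg_TG_nz[OF zC] by blast
qed

lemma simple: "simple_framed cscale l r V Sg mult"
  unfolding simple_framed_def is_ideal_def
proof (intro allI impI)
  fix M assume M: "module.subspace cscale M \<and> M \<subseteq> V \<and> (\<forall>x\<in>M. \<forall>g. comp l r Sg g x \<in> M) \<and> (\<forall>a\<in>V. \<forall>m\<in>M. mult a m \<in> M)"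
  have M0: "0 \<in> M" using M cs.subspace_0 by blast
  show "M = {0} \<or> M = V"
  proof (cases "M \<subseteq> {0}")
    case True thus ?thesis using M0 by blast
  next
    case False
    then obtain x where x: "x \<in> M" "x \<noteq> 0" by blast
    then obtain \<beta> where b: "x \<beta> \<noteq> 0" by (auto simp: fun_eq_iff)
    have xV: "x \<in> V" using x M by blast
    hence bC: "\<beta> \<in> C" using b by (auto simp: tw_space_def)
    have "comp l r Sg (TG \<beta>) x = sng \<beta> (x \<beta>)"
      unfolding comp_V[OF xV] pf_def sng_def by (rule ext) (use toGrade0_inj in auto)
    hence sM: "sng \<beta> (x \<beta>) \<in> M" using M x by metis
    have "\<epsilon> \<beta> \<beta> \<in> {1,-1}" using pm bC by blast
    hence en: "of_int (\<epsilon> \<beta> \<beta>) \<noteq> (0::complex)" by auto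
    have "mult (sng \<beta> (1 / (of_int (\<epsilon> \<beta> \<beta>) * x \<beta>))) (sng \<beta> (x \<beta>)) = tw_basis czero"
      using bC en b by (simp add: mult_sng cadd_self tw_basis_sng)
    hence oneM: "tw_basis czero \<in> M" using M sM sng_V[OF bC] by metis
    have "V \<subseteq> M"
    proof
      fix a assume "a \<in> V"
      thus "a \<in> M" using one_right M oneM by metis
    qed
    thus ?thesis using M by blast
  qed
qed

end

theorem mainTheorem10:
  fixes l r :: nat and C :: "codeword set" and \<epsilon> :: "codeword \<Rightarrow> codeword \<Rightarrow> int"
  assumes "even_code l r C"
    and "\<forall>\<alpha>\<in>C. \<forall>\<beta>\<in>C. \<epsilon> \<alpha> \<beta> \<in> {1, -1}"
    and "\<forall>\<alpha>\<in>C. \<forall>\<beta>\<in>C. \<forall>\<gamma>\<in>C. \<epsilon> (cadd \<alpha> \<beta>) \<gamma> = \<epsilon> \<alpha> \<gamma> * \<epsilon> \<beta> \<gamma>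
                          \<and> \<epsilon> \<alpha> (cadd \<beta> \<gamma>) = \<epsilon> \<alpha> \<beta> * \<epsilon> \<alpha> \<gamma>"
    and "\<forall>\<alpha>\<in>C. \<epsilon> \<alpha> \<alpha> = (-1) ^ nat \<bar>wt l r \<alpha> div 2\<bar>"
    and "\<forall>\<alpha>\<in>C. \<forall>\<beta>\<in>C. \<epsilon> \<alpha> \<beta> * \<epsilon> \<beta> \<alpha> = (-1) ^ nat \<bar>wt l r (cmul \<alpha> \<beta>)\<bar>"
  shows "framed_algebra cscale l r (tw_space C) (tw_grading C) (tw_mult C \<epsilon>) (tw_basis czero)
       \<and> simple_framed cscale l r (tw_space C) (tw_grading C) (tw_mult C \<epsilon>)
       \<and> struct_code_D l r (tw_grading C) = {czero}
       \<and> struct_code_C l r (tw_grading C) = C"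
proof -
  interpret twctx l r C \<epsilon> using assms(1,2,3,5) by unfold_locales
  have one_nz: "tw_basis czero \<noteq> 0"
  proof
    assume "tw_basis czero = 0"
    hence "tw_basis czero czero = 0" by simp
    thus False by (simp add: tw_basis_def)
  qed
  have "framed_algebra cscale l r (tw_space C) (tw_grading C) (tw_mult C \<epsilon>) (tw_basis czero)"
    unfolding framed_algebra_def
    using graded bilin FA1 one_nz Sg0 one_left one_right FA3 FA4 by blast
  thus ?thesis using simple codeD codeC by blast
qed

end
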